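(* For all integers $n,f$ with $1\le f\le n-2$, $\mathrm{Cons}(n,f)$ is $C$-reducible to the wait-free Consensus task $\mathrm{Cons}(n,n-1)$, but $\mathrm{Cons}(n,n-1)$ is not $C$-reducible to $\mathrm{Cons}(n,f)$.
   Context: Model: a finite set of processes runs an asynchronous algorithm communicating by reliable message passing with unbounded delays and speeds; processes fail only by crashing. Time is $\mathcal T=\mathbb N$; a failure pattern $F$ for $\Pi$ is a nondecreasing map $\mathcal T\to2^\Pi$, $Faulty(F)=\bigcup_tF(t)$. A task $T=(P,f)$ consists of a binary agreement problem $P$ (mapping $(F,\vec V)$, $\vec V\in\{0,1\}^\Pi$, to a nonempty $P(F,\vec V)\subseteq\{0,1\}$) and a resiliency degree $f$. An algorithm solves $T$ if in every run with $|Faulty(F)|\le f$ and initial values $\vec V$: every correct process eventually decides, decisions are irrevocable, no two processes decide differently, and decisions lie in $P(F,\vec V)$. Binary Consensus $\mathrm{Cons}(n,f)=(\mathrm{Cons}_{\Pi},f)$ on $\Pi=\{1,\dots,n\}$: $\mathrm{Cons}_\Pi(F,\vec V)=\{v\}$ if all entries of $\vec V$ equal $v$, and $\{0,1\}$ otherwise. Oracles: for $T=(P,f)$ on $\Pi$, $\mathcal O.T$ is a black box with consultants $\Pi$; its history is a sequence of successive consultations, in each of which every consultant may submit at most one query in $\{0,1\}$ and the oracle returns a common response $d$ with $d\in P(F,\vec V)$ for every $\vec V$ extending the partial query vector (the oracle may use the whole failure pattern, including future crashes), and every correct querier gets the response whenever at least $|\Pi|-f$ consultants query; $\mathcal O.T$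 is the most general such oracle. $T_1\le_C T_2$ means there is an algorithm solving $T_1$ whose processes, besides message passing, may consult the oracle $\mathcal O.T_2$. *)

theory Defs
  imports Main
begin

text \<open>Processes are natural numbers; the process set of a task on n processes is
  Pi = {1..n}. Binary values {0,1} are rendered as bool (False = 0, True = 1).
  Time is nat.\<close>

type_synonym failure_pattern = "nat \<Rightarrow> nat set"

definition Faulty :: "failure_pattern \<Rightarrow> nat set" where
  "Faulty F = (\<Union>t. F t)"

definition failure_pattern_on :: "nat set \<Rightarrow> failure_pattern \<Rightarrow> bool" where
  "failure_pattern_on Pi F \<longleftrightarrow> mono F \<and> (\<forall>t. F t \<subseteq> Pi)"

definition Correct :: "nat set \<Rightarrow> failure_pattern \<Rightarrow> nat set" where
  "Correct Pi F = Pi - Faulty F"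

type_synonym agreement_problem = "failure_pattern \<Rightarrow> (nat \<Rightarrow> bool) \<Rightarrow> bool set"

text \<open>A task on the process set {1..n}: the problem and the resiliency degree.\<close>
record task =
  tprocs :: nat
  tproblem :: agreement_problem
  tres :: nat

definition ConsP :: "nat \<Rightarrow> agreement_problem" where
  "ConsP n F V =
     (if (\<forall>p\<in>{1..n}. V p) then {True}
      else if (\<forall>p\<in>{1..n}. \<not> V p) then {False}
      else UNIV)"

definition ConsTask :: "nat \<Rightarrow> nat \<Rightarrow> task" where
  "ConsTask n f = \<lparr>tprocs = n, tproblem = ConsP n, tres = f\<rparr>"

text \<open>What a process receives in a step: nothing, a message (sender, content),
  or a response (consultation index, value) from the oracle.\<close>
datatype 'm event = NoEvent | Receive nat 'm | Response nat bool

text \<open>A deterministic algorithm: initial state from process id and input value;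
  a step maps (process, state, received event) to (new state, messages sent as
  (destination, content) list, optional oracle query); the decision of a state.\<close>
record ('s, 'm) alg =
  init :: "nat \<Rightarrow> bool \<Rightarrow> 's"
  trans :: "nat \<Rightarrow> 's \<Rightarrow> 'm event \<Rightarrow> 's \<times> (nat \<times> 'm) list \<times> bool option"
  decision :: "'s \<Rightarrow> bool option"

text \<open>Local state of process p at (the beginning of) time t, given the inputs V,
  the schedule sc (which process, if any, takes a step at time t) and the events ev
  received in those steps.\<close>
primrec state :: "('s,'m) alg \<Rightarrow> (nat \<Rightarrow> bool) \<Rightarrow> (nat \<Rightarrow> nat option) \<Rightarrow> (nat \<Rightarrow> 'm event)
                  \<Rightarrow> nat \<Rightarrow> nat \<Rightarrow> 's" where
  "state A V sc ev 0 p = init A p (V p)"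
| "state A V sc ev (Suc t) p =
     (if sc t = Some p then fst (trans A p (state A V sc ev t p) (ev t))
      else state A V sc ev t p)"

definition step_output :: "('s,'m) alg \<Rightarrow> (nat \<Rightarrow> bool) \<Rightarrow> (nat \<Rightarrow> nat option) \<Rightarrow> (nat \<Rightarrow> 'm event)
                  \<Rightarrow> nat \<Rightarrow> (nat \<times> 'm) list \<times> bool option" where
  "step_output A V sc ev t =
     (case sc t of None \<Rightarrow> ([], None)
      | Some p \<Rightarrow> snd (trans A p (state A V sc ev t p) (ev t)))"

definition sent where "sent A V sc ev t = fst (step_output A V sc ev t)"
definition query where "query A V sc ev t = snd (step_output A V sc ev t)"

text \<open>Consultation index of a query issued by p at time t: the k-th query of a
  process (counting from 0) belongs to the k-th consultation.\<close>
definition qindex where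
  "qindex A V sc ev p t = card {s. s < t \<and> sc s = Some p \<and> query A V sc ev s \<noteq> None}"

definition queried_before where
  "queried_before A V sc ev k p v t \<longleftrightarrow>
     (\<exists>s<t. sc s = Some p \<and> query A V sc ev s = Some v \<and> qindex A V sc ev p s = k)"

definition queriers where
  "queriers A V sc ev k = {p. \<exists>s v. sc s = Some p \<and> query A V sc ev s = Some v \<and> qindex A V sc ev p s = k}"

text \<open>Admissible runs of algorithm A on processes {1..n} with access to the
  (most general) oracle O.T2 for T2 = (P2, f2) with consultants {1..n}.
  src t identifies the send event (time, position in the sent list) matched by a
  message reception at time t; ora k is the common response of consultation k.\<close>
definition is_run ::
  "nat \<Rightarrow> agreement_problem \<Rightarrow> nat \<Rightarrow> ('s,'m) alg \<Rightarrow> failure_pattern \<Rightarrow> (nat \<Rightarrow> bool)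
   \<Rightarrow> (nat \<Rightarrow> nat option) \<Rightarrow> (nat \<Rightarrow> 'm event) \<Rightarrow> (nat \<Rightarrow> nat \<times> nat) \<Rightarrow> (nat \<Rightarrow> bool) \<Rightarrow> bool"
where
  "is_run n P2 f2 A F V sc ev src ora \<longleftrightarrow>
     failure_pattern_on {1..n} F
   \<comment> \<open>only alive processes of Pi take steps\<close>
   \<and> (\<forall>t p. sc t = Some p \<longrightarrow> p \<in> {1..n} \<and> p \<notin> F t)
   \<comment> \<open>correct processes take infinitely many steps\<close>
   \<and> (\<forall>p\<in>Correct {1..n} F. \<forall>t. \<exists>t'\<ge>t. sc t' = Some p)
   \<comment> \<open>every received message was sent earlier to the receiver by the sender\<close>
   \<and> (\<forall>t p q m. sc t = Some p \<and> ev t = Receive q m \<longrightarrow>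
        fst (src t) < t \<and> sc (fst (src t)) = Some q
        \<and> snd (src t) < length (sent A V sc ev (fst (src t)))
        \<and> sent A V sc ev (fst (src t)) ! snd (src t) = (p, m))
   \<comment> \<open>no message is received twice\<close>
   \<and> (\<forall>t t' p p' q q' m m'. sc t = Some p \<and> ev t = Receive q m \<and> sc t' = Some p'
        \<and> ev t' = Receive q' m' \<and> src t = src t' \<longrightarrow> t = t')
   \<comment> \<open>reliable channels: every message sent to a correct process is received\<close>
   \<and> (\<forall>s i q p m. sc s = Some q \<and> i < length (sent A V sc ev s) \<and> sent A V sc ev s ! i = (p, m)
        \<and> p \<in> Correct {1..n} F \<longrightarrow>
        (\<exists>t. sc t = Some p \<and> ev t = Receive q m \<and> src t = (s, i)))
   \<comment> \<open>oracle responses: common value, only to queriers, valid for every input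
       vector extending the partial query vector of the consultation\<close>
   \<and> (\<forall>t p k d. sc t = Some p \<and> ev t = Response k d \<longrightarrow>
        d = ora k \<and> (\<exists>v. queried_before A V sc ev k p v t)
        \<and> (\<forall>V'. (\<forall>q v. queried_before A V sc ev k q v t \<longrightarrow> V' q = v) \<longrightarrow> d \<in> P2 F V'))
   \<comment> \<open>each querier receives the response of a consultation at most once\<close>
   \<and> (\<forall>t t' p k d d'. sc t = Some p \<and> sc t' = Some p \<and> ev t = Response k d
        \<and> ev t' = Response k d' \<longrightarrow> t = t')
   \<comment> \<open>oracle liveness: if at least n - f2 consultants query, every correct querier
       gets the response\<close>
   \<and> (\<forall>k. card (queriers A V sc ev k) \<ge> n - f2 \<longrightarrow>
        (\<forall>p \<in> queriers A V sc ev k \<inter> Correct {1..n} F.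
            \<exists>t. sc t = Some p \<and> ev t = Response k (ora k)))"

definition solves_with ::
  "('s,'m) alg \<Rightarrow> task \<Rightarrow> task \<Rightarrow> bool" where
  "solves_with A T1 T2 \<longleftrightarrow>
     (let n = tprocs T1 in
      \<forall>F V sc ev src ora.
        is_run n (tproblem T2) (tres T2) A F V sc ev src ora
        \<and> card (Faulty F) \<le> tres T1 \<longrightarrow>
        \<comment> \<open>termination\<close>
        (\<forall>p\<in>Correct {1..n} F. \<exists>t. decision A (state A V sc ev t p) \<noteq> None)
        \<comment> \<open>irrevocability\<close>
      \<and> (\<forall>p\<in>{1..n}. \<forall>t t' d. decision A (state A V sc ev t p) = Some d \<and> t \<le> t'
            \<longrightarrow> decision A (state A V sc ev t' p) = Some d)
        \<comment> \<open>agreement\<close>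
      \<and> (\<forall>p\<in>{1..n}. \<forall>q\<in>{1..n}. \<forall>t t' d d'.
            decision A (state A V sc ev t p) = Some d
            \<and> decision A (state A V sc ev t' q) = Some d' \<longrightarrow> d = d')
        \<comment> \<open>validity\<close>
      \<and> (\<forall>p\<in>{1..n}. \<forall>t d. decision A (state A V sc ev t p) = Some d
            \<longrightarrow> d \<in> tproblem T1 F V))"

definition C_reducible :: "'s itself \<Rightarrow> 'm itself \<Rightarrow> task \<Rightarrow> task \<Rightarrow> bool" where
  "C_reducible (_ :: 's itself) (_ :: 'm itself) T1 T2 \<longleftrightarrow>
     tprocs T1 = tprocs T2 \<and> (\<exists>A :: ('s,'m) alg. solves_with A T1 T2)"

end

theory Submission
  imports Defs
begin


lemma state_cong: "(\<forall>s<t. E s = E' s) \<Longrightarrow> state A V sc E t p = state A V sc E' t p"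
  by (induction t) auto

lemma step_output_cong: "(\<forall>s\<le>t. E s = E' s) \<Longrightarrow> step_output A V sc E t = step_output A V sc E' t"
proof -
  assume h: "\<forall>s\<le>t. E s = E' s"
  then have "\<forall>s<t. E s = E' s" by auto
  then have "\<And>p. state A V sc E t p = state A V sc E' t p" by (rule state_cong)
  then show ?thesis using h by (auto simp: step_output_def split: option.splits)
qed

lemma sent_cong: "(\<forall>s\<le>t. E s = E' s) \<Longrightarrow> sent A V sc E t = sent A V sc E' t"
  unfolding sent_def using step_output_cong by metis

lemma query_cong: "(\<forall>s\<le>t. E s = E' s) \<Longrightarrow> query A V sc E t = query A V sc E' t"
  unfolding query_def using step_output_cong by metis

lemma qindex_cong: "(\<forall>s<t. E s = E' s) \<Longrightarrow> qindex A V sc E p t = qindex A V sc E' p t"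
proof -
  assume h: "\<forall>s<t. E s = E' s"
  have "{s. s < t \<and> sc s = Some p \<and> query A V sc E s \<noteq> None} = {s. s < t \<and> sc s = Some p \<and> query A V sc E' s \<noteq> None}"
  proof (intro Collect_cong conj_cong refl)
    fix s assume "s < t"
    then have "\<forall>s'\<le>s. E s' = E' s'" using h by auto
    then show "(query A V sc E s \<noteq> None) = (query A V sc E' s \<noteq> None)" using query_cong by metis
  qed
  then show ?thesis unfolding qindex_def by simp
qed

lemma qindex_less:
  assumes "sc s1 = Some p" "query A V sc E s1 \<noteq> None" "s1 < s2"
  shows "qindex A V sc E p s1 < qindex A V sc E p s2"
proof -
  have "{s. s < s1 \<and> sc s = Some p \<and> query A V sc E s \<noteq> None} \<subset> {s. s < s2 \<and> sc s = Some p \<and> query A V sc E s \<noteq> None}"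
    using assms by auto
  moreover have "finite {s. s < s2 \<and> sc s = Some p \<and> query A V sc E s \<noteq> None}" by auto
  ultimately show ?thesis unfolding qindex_def by (rule psubset_card_mono[rotated])
qed

lemma qindex_inj:
  assumes "sc s1 = Some p" "query A V sc E s1 \<noteq> None" "sc s2 = Some p" "query A V sc E s2 \<noteq> None"
    "qindex A V sc E p s1 = qindex A V sc E p s2"
  shows "s1 = s2"
  using qindex_less[of sc s1 p A V E s2] qindex_less[of sc s2 p A V E s1] assms
  by (metis less_irrefl nat_neq_iff)

definition evOf :: "(nat \<Rightarrow> ((nat \<times> nat) \<times> 'm event) option) \<Rightarrow> nat \<Rightarrow> 'm event" where
  "evOf J t = (case J t of None \<Rightarrow> NoEvent | Some xe \<Rightarrow> snd xe)"

definition lexleast :: "(nat \<times> nat \<Rightarrow> bool) \<Rightarrow> nat \<times> nat" where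
  "lexleast P = (let s = (LEAST s. \<exists>j. P (s,j)) in (s, LEAST j. P (s,j)))"

lemma lexleast:
  assumes "P x"
  shows "P (lexleast P) \<and> (fst (lexleast P) < fst x \<or> (fst (lexleast P) = fst x \<and> snd (lexleast P) \<le> snd x))"
proof -
  obtain a b where x: "x = (a,b)" by force
  define s where "s = (LEAST s. \<exists>j. P (s,j))"
  have ex: "\<exists>j. P (s,j)" unfolding s_def by (rule LeastI[of _ a]) (use assms x in auto)
  have sa: "s \<le> a" unfolding s_def by (rule Least_le) (use assms x in auto)
  have l: "lexleast P = (s, LEAST j. P (s,j))" unfolding lexleast_def s_def Let_def by simp
  have "P (s, LEAST j. P (s,j))" using ex by (metis LeastI)
  moreover have "s = a \<Longrightarrow> (LEAST j. P (s,j)) \<le> b" using assms x by (simp add: Least_le)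
  ultimately show ?thesis using l x sa by auto
qed

locale gen =
  fixes A :: "('s,'m) alg" and V :: "nat \<Rightarrow> bool" and sc :: "nat \<Rightarrow> nat option" and late :: "nat \<Rightarrow> bool"
begin

definition valid_item where
  "valid_item J t p x \<longleftrightarrow> fst x < t \<and> (\<exists>q. sc (fst x) = Some q \<and>
     ((snd x = 0 \<and> q = p \<and> query A V sc (evOf J) (fst x) \<noteq> None) \<or>
      (0 < snd x \<and> snd x - 1 < length (sent A V sc (evOf J) (fst x)) \<and> fst (sent A V sc (evOf J) (fst x) ! (snd x - 1)) = p)))"

definition allowed :: "nat \<Rightarrow> nat \<times> nat \<Rightarrow> bool" where
  "allowed t x \<longleftrightarrow> late t \<or> (sc (fst x) = sc t \<and> 0 < snd x)"

definition pend where
  "pend J t p x \<longleftrightarrow> valid_item J t p x \<and> allowed t x \<and> (\<forall>t'<t. map_option fst (J t') \<noteq> Some x)"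

definition mkev where
  "mkev J p x = (if snd x = 0 then Response (qindex A V sc (evOf J) p (fst x)) (the (query A V sc (evOf J) (fst x)))
     else Receive (the (sc (fst x))) (snd (sent A V sc (evOf J) (fst x) ! (snd x - 1))))"

definition pick where
  "pick J t = (case sc t of None \<Rightarrow> None | Some p \<Rightarrow>
     if \<exists>x. pend J t p x then Some (lexleast (pend J t p), mkev J p (lexleast (pend J t p))) else None)"

primrec Is where
  "Is 0 = (\<lambda>_. None)"
| "Is (Suc t) = (Is t)(t := pick (Is t) t)"

definition I where "I t = Is (Suc t) t"

abbreviation ev where "ev \<equiv> evOf I"

definition src where "src t = (case I t of None \<Rightarrow> (0,0) | Some xe \<Rightarrow> (fst (fst xe), snd (fst xe) - 1))"

lemma Is_stable: "s < t \<Longrightarrow> Is t s = I s"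
  unfolding I_def by (induction t) (auto simp: less_Suc_eq)

lemma evOf_cong: "(\<forall>s<t. J s = J' s) \<Longrightarrow> s' < t \<Longrightarrow> evOf J s' = evOf J' s'"
  unfolding evOf_def by auto

lemma pend_cong:
  assumes "\<forall>s<t. J s = J' s"
  shows "pend J t p x = pend J' t p x"
proof -
  have e: "\<forall>s\<le>fst x. evOf J s = evOf J' s" if "fst x < t" using assms that evOf_cong[OF assms] by auto
  have "valid_item J t p x = valid_item J' t p x"
    unfolding valid_item_def using e sent_cong[of "fst x" "evOf J" "evOf J'"] query_cong[of "fst x" "evOf J" "evOf J'"]
    by (metis (no_types, lifting))
  then show ?thesis unfolding pend_def using assms by auto
qed

lemma mkev_cong:
  assumes "\<forall>s<t. J s = J' s" "fst x < t"
  shows "mkev J p x = mkev J' p x"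
proof -
  have e: "\<forall>s\<le>fst x. evOf J s = evOf J' s" using assms evOf_cong[OF assms(1)] by auto
  then have "\<forall>s<fst x. evOf J s = evOf J' s" by auto
  then show ?thesis unfolding mkev_def using e sent_cong[of "fst x" "evOf J" "evOf J'"] query_cong[of "fst x" "evOf J" "evOf J'"]
     qindex_cong[of "fst x" "evOf J" "evOf J'"] by metis
qed

lemma pick_cong:
  assumes "\<forall>s<t. J s = J' s"
  shows "pick J t = pick J' t"
proof -
  have pe: "pend J t p = pend J' t p" for p using pend_cong[OF assms] by auto
  have "fst (lexleast (pend J t p)) < t" if "\<exists>x. pend J t p x" for p
    using that lexleast[of "pend J t p"] unfolding pend_def valid_item_def by blast
  then show ?thesis unfolding pick_def using pe mkev_cong[OF assms] by (auto split: option.splits)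
qed

lemma I_eq: "I t = pick I t"
proof -
  have "I t = pick (Is t) t" unfolding I_def by simp
  also have "\<dots> = pick I t" by (rule pick_cong) (simp add: Is_stable)
  finally show ?thesis .
qed

lemma I_None: "sc t = None \<Longrightarrow> I t = None"
  using I_eq[of t] unfolding pick_def by simp

lemma I_Some: "I t = Some (x,e) \<Longrightarrow> \<exists>p. sc t = Some p \<and> pend I t p x \<and> e = mkev I p x"
  using I_eq[of t] lexleast unfolding pick_def by (auto split: option.splits if_splits)

lemma I_pend:
  assumes "sc t = Some p" "pend I t p x"
  shows "\<exists>y. I t = Some (y, mkev I p y) \<and> pend I t p y \<and> (fst y < fst x \<or> (fst y = fst x \<and> snd y \<le> snd x))"
proof -
  have "I t = Some (lexleast (pend I t p), mkev I p (lexleast (pend I t p)))"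
    using I_eq[of t] assms unfolding pick_def by (cases x) auto
  then show ?thesis using lexleast[of "pend I t p" x] assms(2) by blast
qed

lemma valid_unique: "valid_item J t p x \<Longrightarrow> valid_item J t' p' x \<Longrightarrow> p = p'"
  unfolding valid_item_def by auto

lemma valid_mono: "valid_item J t p x \<Longrightarrow> fst x < t' \<Longrightarrow> valid_item J t' p x"
  unfolding valid_item_def by auto

lemma fair:
  assumes inf: "\<forall>t. \<exists>t'\<ge>t. sc t' = Some p" and val: "valid_item I (Suc (fst x)) p x"
    and al: "\<forall>t\<ge>t0. sc t = Some p \<longrightarrow> allowed t x"
  shows "\<exists>t. sc t = Some p \<and> I t = Some (x, mkev I p x)"
proof (rule ccontr)
  assume nex: "\<not> ?thesis"
  have nd: "map_option fst (I t) \<noteq> Some x" for t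
  proof
    assume "map_option fst (I t) = Some x"
    then obtain e where It: "I t = Some (x,e)" by auto
    from I_Some[OF this] obtain p' where "sc t = Some p'" "pend I t p' x" "e = mkev I p' x" by auto
    moreover have "p' = p" using valid_unique[OF _ val] \<open>pend I t p' x\<close> unfolding pend_def by blast
    ultimately show False using nex It by auto
  qed
  define t1 where "t1 = max t0 (Suc (fst x))"
  define S where "S = {t. t1 \<le> t \<and> sc t = Some p}"
  define g where "g t = fst (the (I t))" for t
  define B where "B = (SIGMA s:{..fst x}. {..length (sent A V sc ev s)})"
  have key: "pend I t p (g t) \<and> g t \<in> B \<and> I t = Some (g t, mkev I p (g t))" if "t \<in> S" for t
  proof -
    have tS: "t1 \<le> t" "sc t = Some p" using that S_def by auto
    have "pend I t p x" unfolding pend_def using tS al nd valid_mono[OF val] t1_def by auto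
    from I_pend[OF tS(2) this] obtain y where y: "I t = Some (y, mkev I p y)" "pend I t p y"
      "fst y < fst x \<or> (fst y = fst x \<and> snd y \<le> snd x)" by auto
    have gy: "g t = y" using y g_def by simp
    have "snd y \<le> length (sent A V sc ev (fst y))" using y(2) unfolding pend_def valid_item_def by auto
    then have "y \<in> B" using y(3) unfolding B_def by (cases y) auto
    then show ?thesis using y gy by auto
  qed
  have inj: "inj_on g S"
  proof (rule inj_onI)
    fix a b assume ab: "a \<in> S" "b \<in> S" "g a = g b"
    show "a = b"
    proof (rule ccontr)
      assume "a \<noteq> b"
      then consider "a < b" | "b < a" by linarith
      then show False
      proof cases
        case 1
        have "map_option fst (I a) \<noteq> Some (g b)" using key[OF ab(2)] 1 unfolding pend_def by blast
        then show False using key[OF ab(1)] ab(3) by simp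
      next
        case 2
        have "map_option fst (I b) \<noteq> Some (g a)" using key[OF ab(1)] 2 unfolding pend_def by blast
        then show False using key[OF ab(2)] ab(3) by simp
      qed
    qed
  qed
  have "finite B" unfolding B_def by auto
  moreover have "g ` S \<subseteq> B" using key by auto
  ultimately have "finite (g ` S)" using finite_subset by auto
  then have "finite S" using inj finite_image_iff by auto
  then obtain m where m: "\<forall>t\<in>S. t \<le> m" using finite_nat_set_iff_bounded_le by auto
  obtain t' where "t' \<ge> max t1 (Suc m)" "sc t' = Some p" using inf by blast
  then have "t' \<in> S" unfolding S_def by auto
  then show False using m \<open>t' \<ge> max t1 (Suc m)\<close> by fastforce
qed

lemma ev_Receive:
  assumes "sc t = Some p" "ev t = Receive q m"
  shows "\<exists>x. I t = Some (x, Receive q m) \<and> pend I t p x \<and> 0 < snd x \<and> sc (fst x) = Some q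
     \<and> snd (sent A V sc ev (fst x) ! (snd x - 1)) = m"
proof -
  obtain x e where It: "I t = Some (x,e)" using assms(2) unfolding evOf_def by (auto split: option.splits)
  then have e: "e = Receive q m" using assms(2) unfolding evOf_def by simp
  from I_Some[OF It] assms(1) have pe: "pend I t p x" "e = mkev I p x" by auto
  then have "0 < snd x" using e unfolding mkev_def by (auto split: if_splits)
  moreover obtain q' where "sc (fst x) = Some q'" using pe unfolding pend_def valid_item_def by auto
  ultimately show ?thesis using pe It e unfolding mkev_def by auto
qed

lemma ev_Response:
  assumes "sc t = Some p" "ev t = Response k d"
  shows "\<exists>x. I t = Some (x, Response k d) \<and> pend I t p x \<and> snd x = 0 \<and> sc (fst x) = Some p
     \<and> query A V sc ev (fst x) = Some d \<and> qindex A V sc ev p (fst x) = k"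
proof -
  obtain x e where It: "I t = Some (x,e)" using assms(2) unfolding evOf_def by (auto split: option.splits)
  then have e: "e = Response k d" using assms(2) unfolding evOf_def by simp
  from I_Some[OF It] assms(1) have pe: "pend I t p x" "e = mkev I p x" by auto
  then have s0: "snd x = 0" using e unfolding mkev_def by (auto split: if_splits)
  then have "sc (fst x) = Some p" "query A V sc ev (fst x) \<noteq> None" using pe unfolding pend_def valid_item_def by auto
  then show ?thesis using pe It e s0 unfolding mkev_def by auto
qed

definition oraP where
  "oraP P0 k = (SOME v. \<exists>s. sc s = Some P0 \<and> query A V sc ev s = Some v \<and> qindex A V sc ev P0 s = k)"

lemma oraP_eq:
  assumes "sc s = Some P0" "query A V sc ev s = Some v" "qindex A V sc ev P0 s = k"
  shows "oraP P0 k = v"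
  unfolding oraP_def
proof (rule someI2)
  show "\<exists>s. sc s = Some P0 \<and> query A V sc ev s = Some v \<and> qindex A V sc ev P0 s = k" using assms by blast
next
  fix v' assume "\<exists>s. sc s = Some P0 \<and> query A V sc ev s = Some v' \<and> qindex A V sc ev P0 s = k"
  then obtain s' where s': "sc s' = Some P0" "query A V sc ev s' = Some v'" "qindex A V sc ev P0 s' = k" by blast
  then have "s' = s" using qindex_inj[of sc s' P0 A V ev s] assms by auto
  then show "v' = v" using s' assms by simp
qed

lemma delivered_once:
  assumes "I t = Some (x,e)" "I t' = Some (x,e')" shows "t = t'"
proof (rule ccontr)
  assume "t \<noteq> t'"
  then consider "t < t'" | "t' < t" by linarith
  then show False
  proof cases
    case 1
    from I_Some[OF assms(2)] obtain p where "pend I t' p x" by auto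
    then have "map_option fst (I t) \<noteq> Some x" using 1 unfolding pend_def by blast
    then show False using assms(1) by simp
  next
    case 2
    from I_Some[OF assms(1)] obtain p where "pend I t p x" by auto
    then have "map_option fst (I t') \<noteq> Some x" using 2 unfolding pend_def by blast
    then show False using assms(2) by simp
  qed
qed

lemma run:
  assumes fp: "failure_pattern_on {1..n} F"
  and steps: "\<forall>t p. sc t = Some p \<longrightarrow> p \<in> {1..n} \<and> p \<notin> F t"
  and inf: "\<forall>p\<in>Correct {1..n} F. \<forall>t. \<exists>t'\<ge>t. sc t' = Some p"
  and msgal: "\<forall>p\<in>Correct {1..n} F. \<forall>s j q. sc s = Some q \<and> 0 < j \<longrightarrow> (\<exists>t0. \<forall>t\<ge>t0. sc t = Some p \<longrightarrow> allowed t (s,j))"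
  and live: "\<forall>k. n - f2 \<le> card (queriers A V sc ev k) \<longrightarrow> (\<exists>t0. \<forall>t\<ge>t0. late t)"
  and lateP: "\<forall>t p. late t \<and> sc t = Some p \<longrightarrow> p = P0"
  shows "is_run n (ConsP n) f2 A F V sc ev src (oraP P0)"
  unfolding is_run_def
proof (intro conjI)
  show "failure_pattern_on {1..n} F" by fact
  show "\<forall>t p. sc t = Some p \<longrightarrow> p \<in> {1..n} \<and> p \<notin> F t" by fact
  show "\<forall>p\<in>Correct {1..n} F. \<forall>t. \<exists>t'\<ge>t. sc t' = Some p" by fact
  show "\<forall>t p q m. sc t = Some p \<and> ev t = Receive q m \<longrightarrow>
        fst (src t) < t \<and> sc (fst (src t)) = Some q
        \<and> snd (src t) < length (sent A V sc ev (fst (src t)))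
        \<and> sent A V sc ev (fst (src t)) ! snd (src t) = (p, m)"
  proof (intro allI impI)
    fix t p q m assume h: "sc t = Some p \<and> ev t = Receive q m"
    then obtain x where x: "I t = Some (x, Receive q m)" "pend I t p x" "0 < snd x" "sc (fst x) = Some q"
      "snd (sent A V sc ev (fst x) ! (snd x - 1)) = m" using ev_Receive by blast
    have st: "src t = (fst x, snd x - 1)" using x(1) unfolding src_def by simp
    have "fst x < t" "snd x - 1 < length (sent A V sc ev (fst x))" "fst (sent A V sc ev (fst x) ! (snd x - 1)) = p"
      using x(2,3) unfolding pend_def valid_item_def by auto
    then show "fst (src t) < t \<and> sc (fst (src t)) = Some q
        \<and> snd (src t) < length (sent A V sc ev (fst (src t)))
        \<and> sent A V sc ev (fst (src t)) ! snd (src t) = (p, m)" using st x(4,5) by (simp add: prod_eq_iff)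
  qed
  show "\<forall>t t' p p' q q' m m'. sc t = Some p \<and> ev t = Receive q m \<and> sc t' = Some p'
        \<and> ev t' = Receive q' m' \<and> src t = src t' \<longrightarrow> t = t'"
  proof (intro allI impI)
    fix t t' p p' q q' m m' assume h: "sc t = Some p \<and> ev t = Receive q m \<and> sc t' = Some p'
        \<and> ev t' = Receive q' m' \<and> src t = src t'"
    obtain x where x: "I t = Some (x, Receive q m)" "0 < snd x" using h ev_Receive by blast
    obtain x' where x': "I t' = Some (x', Receive q' m')" "0 < snd x'" using h ev_Receive by blast
    have "src t = (fst x, snd x - 1)" "src t' = (fst x', snd x' - 1)" using x x' unfolding src_def by auto
    then have "x = x'" using h x(2) x'(2) by (cases x, cases x') auto
    then show "t = t'" using delivered_once x(1) x'(1) by blast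
  qed
  show "\<forall>s i q p m. sc s = Some q \<and> i < length (sent A V sc ev s) \<and> sent A V sc ev s ! i = (p, m)
        \<and> p \<in> Correct {1..n} F \<longrightarrow>
        (\<exists>t. sc t = Some p \<and> ev t = Receive q m \<and> src t = (s, i))"
  proof (intro allI impI)
    fix s i q p m assume h: "sc s = Some q \<and> i < length (sent A V sc ev s) \<and> sent A V sc ev s ! i = (p, m)
        \<and> p \<in> Correct {1..n} F"
    have val: "valid_item I (Suc (fst (s, Suc i))) p (s, Suc i)" unfolding valid_item_def using h by auto
    have "\<exists>t0. \<forall>t\<ge>t0. sc t = Some p \<longrightarrow> allowed t (s, Suc i)"
      using msgal h by blast
    then obtain t0 where "\<forall>t\<ge>t0. sc t = Some p \<longrightarrow> allowed t (s, Suc i)" by blast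
    from fair[OF _ val this] inf h obtain t where t: "sc t = Some p" "I t = Some ((s, Suc i), mkev I p (s, Suc i))" by blast
    have "mkev I p (s, Suc i) = Receive q m" unfolding mkev_def using h by simp
    then show "\<exists>t. sc t = Some p \<and> ev t = Receive q m \<and> src t = (s, i)"
      using t unfolding evOf_def src_def by auto
  qed
  show "\<forall>t p k d. sc t = Some p \<and> ev t = Response k d \<longrightarrow>
        d = oraP P0 k \<and> (\<exists>v. queried_before A V sc ev k p v t)
        \<and> (\<forall>V'. (\<forall>q v. queried_before A V sc ev k q v t \<longrightarrow> V' q = v) \<longrightarrow> d \<in> ConsP n F V')"
  proof (intro allI impI)
    fix t p k d assume h: "sc t = Some p \<and> ev t = Response k d"
    then obtain x where x: "I t = Some (x, Response k d)" "pend I t p x" "snd x = 0" "sc (fst x) = Some p"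
      "query A V sc ev (fst x) = Some d" "qindex A V sc ev p (fst x) = k" using ev_Response by blast
    have "late t" using x(2,3) unfolding pend_def allowed_def by auto
    then have "p = P0" using lateP h by blast
    have qb: "queried_before A V sc ev k p d t" unfolding queried_before_def
      using x(2,4,5,6) unfolding pend_def valid_item_def by blast
    have pn: "p \<in> {1..n}" using steps h by blast
    show "d = oraP P0 k \<and> (\<exists>v. queried_before A V sc ev k p v t)
        \<and> (\<forall>V'. (\<forall>q v. queried_before A V sc ev k q v t \<longrightarrow> V' q = v) \<longrightarrow> d \<in> ConsP n F V')"
    proof (intro conjI allI impI exI)
      show "d = oraP P0 k" using oraP_eq x \<open>p = P0\<close> by simp
      show "queried_before A V sc ev k p d t" by fact
      fix V' assume "\<forall>q v. queried_before A V sc ev k q v t \<longrightarrow> V' q = v"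
      then have "V' p = d" using qb by blast
      then show "d \<in> ConsP n F V'" unfolding ConsP_def using pn by auto
    qed
  qed
  show "\<forall>t t' p k d d'. sc t = Some p \<and> sc t' = Some p \<and> ev t = Response k d
        \<and> ev t' = Response k d' \<longrightarrow> t = t'"
  proof (intro allI impI)
    fix t t' p k d d' assume h: "sc t = Some p \<and> sc t' = Some p \<and> ev t = Response k d
        \<and> ev t' = Response k d'"
    obtain x where x: "I t = Some (x, Response k d)" "snd x = 0" "sc (fst x) = Some p"
      "query A V sc ev (fst x) = Some d" "qindex A V sc ev p (fst x) = k" using h ev_Response by blast
    obtain x' where x': "I t' = Some (x', Response k d')" "snd x' = 0" "sc (fst x') = Some p"
      "query A V sc ev (fst x') = Some d'" "qindex A V sc ev p (fst x') = k" using h ev_Response by blast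
    have "fst x = fst x'" using qindex_inj[of sc "fst x" p A V ev "fst x'"] x x' by auto
    then have "x = x'" using x(2) x'(2) by (simp add: prod_eq_iff)
    then have "d = d'" using x(4) x'(4) by simp
    then show "t = t'" using delivered_once x(1) x'(1) \<open>x = x'\<close> by blast
  qed
  show "\<forall>k. card (queriers A V sc ev k) \<ge> n - f2 \<longrightarrow>
        (\<forall>p \<in> queriers A V sc ev k \<inter> Correct {1..n} F.
            \<exists>t. sc t = Some p \<and> ev t = Response k (oraP P0 k))"
  proof (intro allI impI ballI)
    fix k p assume c: "card (queriers A V sc ev k) \<ge> n - f2" and p: "p \<in> queriers A V sc ev k \<inter> Correct {1..n} F"
    obtain t0 where t0: "\<forall>t\<ge>t0. late t" using live c by blast
    obtain s v where s: "sc s = Some p" "query A V sc ev s = Some v" "qindex A V sc ev p s = k"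
      using p unfolding queriers_def by blast
    have val: "valid_item I (Suc (fst (s, 0))) p (s, 0)" unfolding valid_item_def using s by auto
    have "\<forall>t\<ge>t0. sc t = Some p \<longrightarrow> allowed t (s, 0)" using t0 unfolding allowed_def by auto
    from fair[OF _ val this] inf p obtain t where t: "sc t = Some p" "I t = Some ((s, 0), mkev I p (s, 0))" by blast
    obtain t' where "t' \<ge> t0" "sc t' = Some p" using inf p by blast
    then have "p = P0" using lateP t0 by blast
    have "mkev I p (s, 0) = Response k (oraP P0 k)" unfolding mkev_def using s oraP_eq \<open>p = P0\<close> by simp
    then show "\<exists>t. sc t = Some p \<and> ev t = Response k (oraP P0 k)"
      using t unfolding evOf_def by auto
  qed
qed

lemma pend_char:
  assumes "sc t = Some p" "\<not> late t"
  shows "pend I t p x \<longleftrightarrow> (fst x < t \<and> sc (fst x) = Some p \<and> 0 < snd x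
     \<and> snd x - 1 < length (sent A V sc ev (fst x)) \<and> fst (sent A V sc ev (fst x) ! (snd x - 1)) = p
     \<and> (\<forall>t'<t. sc t' = Some p \<longrightarrow> map_option fst (I t') \<noteq> Some x))"
proof
  assume "pend I t p x"
  then show "fst x < t \<and> sc (fst x) = Some p \<and> 0 < snd x
     \<and> snd x - 1 < length (sent A V sc ev (fst x)) \<and> fst (sent A V sc ev (fst x) ! (snd x - 1)) = p
     \<and> (\<forall>t'<t. sc t' = Some p \<longrightarrow> map_option fst (I t') \<noteq> Some x)"
    using assms unfolding pend_def valid_item_def allowed_def by auto
next
  assume h: "fst x < t \<and> sc (fst x) = Some p \<and> 0 < snd x
     \<and> snd x - 1 < length (sent A V sc ev (fst x)) \<and> fst (sent A V sc ev (fst x) ! (snd x - 1)) = p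
     \<and> (\<forall>t'<t. sc t' = Some p \<longrightarrow> map_option fst (I t') \<noteq> Some x)"
  have val: "valid_item I t p x" unfolding valid_item_def using h by auto
  have "map_option fst (I t') \<noteq> Some x" if "t' < t" for t'
  proof
    assume "map_option fst (I t') = Some x"
    then obtain e where It: "I t' = Some (x,e)" by auto
    from I_Some[OF this] obtain p' where p': "sc t' = Some p'" "pend I t' p' x" by auto
    then have "p' = p" using valid_unique[OF _ val] unfolding pend_def by blast
    then have "map_option fst (I t') \<noteq> Some x" using h p'(1) that by blast
    then show False using It by simp
  qed
  then show "pend I t p x" unfolding pend_def allowed_def using val h assms by auto
qed

end

lemma sent_Some: "sc s = Some p \<Longrightarrow> sent A V sc E s = fst (snd (trans A p (state A V sc E s p) (E s)))"
  unfolding sent_def step_output_def by simp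

lemma sim:
  assumes V: "V p = V' p" and S: "\<forall>t<T. (sc t = Some p) = (sc' t = Some p)"
    and L: "\<forall>t<T. sc t = Some p \<longrightarrow> \<not> late t \<and> \<not> late' t"
  shows "state A V sc (evOf (gen.I A V sc late)) T p = state A V' sc' (evOf (gen.I A V' sc' late')) T p"
proof -
  interpret g1: gen A V sc late .
  interpret g2: gen A V' sc' late' .
  have main: "t \<le> T \<longrightarrow> (\<forall>s\<le>t. state A V sc g1.ev s p = state A V' sc' g2.ev s p)
     \<and> (\<forall>s<t. sc s = Some p \<longrightarrow> g1.I s = g2.I s)" for t
  proof (induction t)
    case 0
    show ?case using V by simp
  next
    case (Suc t)
    show ?case
    proof
      assume tT: "Suc t \<le> T"
      then have IH: "\<forall>s\<le>t. state A V sc g1.ev s p = state A V' sc' g2.ev s p"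
        "\<forall>s<t. sc s = Some p \<longrightarrow> g1.I s = g2.I s" using Suc by auto
      have Ieq: "g1.I t = g2.I t" if sct: "sc t = Some p"
      proof -
        have sct': "sc' t = Some p" using S tT sct by auto
        have nl: "\<not> late t" "\<not> late' t" using L tT sct by auto
        have evq: "g1.ev s = g2.ev s" if "s < t" "sc s = Some p" for s
          using IH(2) that unfolding evOf_def by simp
        have sent_eq: "sent A V sc g1.ev s = sent A V' sc' g2.ev s" if "s < t" "sc s = Some p" for s
        proof -
          have "sc' s = Some p" using S that tT by auto
          then show ?thesis using sent_Some[of sc s p A V g1.ev] sent_Some[of sc' s p A V' g2.ev] that IH(1) evq
            by simp
        qed
        have pe: "g1.pend g1.I t p = g2.pend g2.I t p"
        proof
          fix x :: "nat \<times> nat"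
          have a: "(fst x < t \<and> sc (fst x) = Some p) = (fst x < t \<and> sc' (fst x) = Some p)" using S tT by auto
          have b: "(\<forall>t'<t. sc t' = Some p \<longrightarrow> map_option fst (g1.I t') \<noteq> Some x)
             = (\<forall>t'<t. sc' t' = Some p \<longrightarrow> map_option fst (g2.I t') \<noteq> Some x)"
          proof -
            have "\<forall>t'<t. (sc t' = Some p) = (sc' t' = Some p)" using S tT by auto
            then show ?thesis using IH(2) by auto
          qed
          show "g1.pend g1.I t p x = g2.pend g2.I t p x"
            unfolding g1.pend_char[OF sct nl(1)] g2.pend_char[OF sct' nl(2)]
            using a b sent_eq by (metis (no_types, lifting))
        qed
        have mk: "g1.mkev g1.I p y = g2.mkev g2.I p y" if "g1.pend g1.I t p y" for y
        proof -
          have y: "fst y < t" "sc (fst y) = Some p" "0 < snd y"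
            using that unfolding g1.pend_char[OF sct nl(1)] by auto
          then have "sc' (fst y) = Some p" using S tT by auto
          then show ?thesis unfolding g1.mkev_def g2.mkev_def using y sent_eq by simp
        qed
        have "g1.I t = g1.pick g1.I t" by (rule g1.I_eq)
        also have "\<dots> = g2.pick g2.I t"
        proof (cases "\<exists>x. g1.pend g1.I t p x")
          case True
          then obtain x where "g1.pend g1.I t p x" by blast
          then have "g1.pend g1.I t p (lexleast (g1.pend g1.I t p))" using lexleast by blast
          then have "g1.mkev g1.I p (lexleast (g1.pend g1.I t p)) = g2.mkev g2.I p (lexleast (g1.pend g1.I t p))"
            by (rule mk)
          then show ?thesis unfolding g1.pick_def g2.pick_def using sct sct' pe True by simp
        next
          case False
          then show ?thesis unfolding g1.pick_def g2.pick_def using sct sct' pe by simp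
        qed
        also have "\<dots> = g2.I t" by (rule g2.I_eq[symmetric])
        finally show ?thesis .
      qed
      have st: "state A V sc g1.ev (Suc t) p = state A V' sc' g2.ev (Suc t) p"
      proof (cases "sc t = Some p")
        case True
        then have "sc' t = Some p" using S tT by auto
        moreover have "g1.ev t = g2.ev t" using Ieq[OF True] unfolding evOf_def by simp
        ultimately show ?thesis using True IH(1) by simp
      next
        case False
        then have "sc' t \<noteq> Some p" using S tT by auto
        then show ?thesis using False IH(1) by simp
      qed
      show "(\<forall>s\<le>Suc t. state A V sc g1.ev s p = state A V' sc' g2.ev s p)
         \<and> (\<forall>s<Suc t. sc s = Some p \<longrightarrow> g1.I s = g2.I s)"
        using IH st Ieq by (auto simp: le_Suc_eq less_Suc_eq)
    qed
  qed
  show ?thesis using main[of T] by simp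
qed



lemma solvesD:
  assumes "solves_with A (ConsTask n (n - 1)) (ConsTask n f)"
    "is_run n (ConsP n) f A F V sc ev src ora" "card (Faulty F) \<le> n - 1"
  shows "(\<forall>p\<in>Correct {1..n} F. \<exists>t. decision A (state A V sc ev t p) \<noteq> None)
    \<and> (\<forall>p\<in>{1..n}. \<forall>q\<in>{1..n}. \<forall>t t' d d'.
            decision A (state A V sc ev t p) = Some d
            \<and> decision A (state A V sc ev t' q) = Some d' \<longrightarrow> d = d')
    \<and> (\<forall>p\<in>{1..n}. \<forall>t d. decision A (state A V sc ev t p) = Some d \<longrightarrow> d \<in> ConsP n F V)"
proof -
  have H: "\<forall>F V sc ev src ora. is_run n (ConsP n) f A F V sc ev src ora \<and> card (Faulty F) \<le> n - 1 \<longrightarrow>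
        (\<forall>p\<in>Correct {1..n} F. \<exists>t. decision A (state A V sc ev t p) \<noteq> None)
      \<and> (\<forall>p\<in>{1..n}. \<forall>t t' d. decision A (state A V sc ev t p) = Some d \<and> t \<le> t'
            \<longrightarrow> decision A (state A V sc ev t' p) = Some d)
    \<and> (\<forall>p\<in>{1..n}. \<forall>q\<in>{1..n}. \<forall>t t' d d'.
            decision A (state A V sc ev t p) = Some d
            \<and> decision A (state A V sc ev t' q) = Some d' \<longrightarrow> d = d')
    \<and> (\<forall>p\<in>{1..n}. \<forall>t d. decision A (state A V sc ev t p) = Some d \<longrightarrow> d \<in> ConsP n F V)"
    using assms(1) unfolding solves_with_def ConsTask_def Let_def task.simps .
  note X = H[rule_format, OF conjI[OF assms(2) assms(3)]]
  show ?thesis using conjunct1[OF X] conjunct2[OF conjunct2[OF X]] by (rule conjI)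
qed

lemma ConsP_all: "1 \<le> n \<Longrightarrow> ConsP n F (\<lambda>_. b) = {b}"
  unfolding ConsP_def by (cases b) auto

lemma impossible:
  assumes f1: "1 \<le> f" and fn: "f + 2 \<le> n"
  shows "\<not> solves_with (A :: ('s,'m) alg) (ConsTask n (n - 1)) (ConsTask n f)"
proof
  assume sol: "solves_with A (ConsTask n (n - 1)) (ConsTask n f)"
  have n1: "1 \<le> n" and n2: "2 \<le> n" using fn f1 by auto
  define sc1 :: "nat \<Rightarrow> nat option" where "sc1 = (\<lambda>t. Some 1)"
  define F1 :: failure_pattern where "F1 = (\<lambda>t. {2..n})"
  define V1 :: "nat \<Rightarrow> bool" where "V1 = (\<lambda>_. False)"
  define late1 :: "nat \<Rightarrow> bool" where "late1 = (\<lambda>_. False)"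
  interpret g1: gen A V1 sc1 late1 .
  have Fa1: "Faulty F1 = {2..n}" unfolding Faulty_def F1_def by simp
  have C1: "Correct {1..n} F1 = {1}" unfolding Correct_def Fa1 using n1 by auto
  have q1: "card (queriers A V1 sc1 g1.ev k) \<le> 1" for k
  proof -
    have "queriers A V1 sc1 g1.ev k \<subseteq> {1}" unfolding queriers_def sc1_def by auto
    then show ?thesis using card_mono[of "{1::nat}"] by fastforce
  qed
  have run1: "is_run n (ConsP n) f A F1 V1 sc1 g1.ev g1.src (g1.oraP 1)"
  proof (rule g1.run)
    show "failure_pattern_on {1..n} F1" unfolding failure_pattern_on_def F1_def mono_def by auto
    show "\<forall>t p. sc1 t = Some p \<longrightarrow> p \<in> {1..n} \<and> p \<notin> F1 t" unfolding sc1_def F1_def using n1 by auto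
    show "\<forall>p\<in>Correct {1..n} F1. \<forall>t. \<exists>t'\<ge>t. sc1 t' = Some p" unfolding C1 sc1_def by auto
    show "\<forall>p\<in>Correct {1..n} F1. \<forall>s j q. sc1 s = Some q \<and> 0 < j \<longrightarrow> (\<exists>t0. \<forall>t\<ge>t0. sc1 t = Some p \<longrightarrow> g1.allowed t (s,j))"
      unfolding g1.allowed_def by (simp add: sc1_def)
    show "\<forall>k. n - f \<le> card (queriers A V1 sc1 g1.ev k) \<longrightarrow> (\<exists>t0. \<forall>t\<ge>t0. late1 t)"
    proof (intro allI impI)
      fix k assume "n - f \<le> card (queriers A V1 sc1 g1.ev k)"
      with q1[of k] fn show "\<exists>t0. \<forall>t\<ge>t0. late1 t" by simp
    qed
    show "\<forall>t p. late1 t \<and> sc1 t = Some p \<longrightarrow> p = 1" unfolding late1_def by simp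
  qed
  have "card (Faulty F1) \<le> n - 1" unfolding Fa1 by simp
  note S1 = solvesD[OF sol run1 this]
  have one1: "(1::nat) \<in> {1..n}" using n1 by simp
  have s1: "\<exists>t. decision A (state A V1 sc1 g1.ev t 1) \<noteq> None" using S1 C1 by blast
  have val1: "\<forall>t d. decision A (state A V1 sc1 g1.ev t 1) = Some d \<longrightarrow> d \<in> ConsP n F1 V1"
    using S1 one1 by blast
  obtain T1 d1 where T1: "decision A (state A V1 sc1 g1.ev T1 1) = Some d1" using s1 by blast
  have "d1 = False" using val1 T1 ConsP_all[OF n1] unfolding V1_def by auto
  with T1 have T1': "decision A (state A V1 sc1 g1.ev T1 1) = Some False" by simp
  define sc2 :: "nat \<Rightarrow> nat option" where "sc2 = (\<lambda>t. if t < T1 then None else Some 2)"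
  define F2 :: failure_pattern where "F2 = (\<lambda>t. {1..n} - {2})"
  define V2 :: "nat \<Rightarrow> bool" where "V2 = (\<lambda>_. True)"
  define late2 :: "nat \<Rightarrow> bool" where "late2 = (\<lambda>_. False)"
  interpret g2: gen A V2 sc2 late2 .
  have Fa2: "Faulty F2 = {1..n} - {2}" unfolding Faulty_def F2_def by simp
  have C2: "Correct {1..n} F2 = {2}" unfolding Correct_def Fa2 using n2 by auto
  have q2: "card (queriers A V2 sc2 g2.ev k) \<le> 1" for k
  proof -
    have "queriers A V2 sc2 g2.ev k \<subseteq> {2}" unfolding queriers_def sc2_def by (auto split: if_splits)
    then show ?thesis using card_mono[of "{2::nat}"] by fastforce
  qed
  have run2: "is_run n (ConsP n) f A F2 V2 sc2 g2.ev g2.src (g2.oraP 2)"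
  proof (rule g2.run)
    show "failure_pattern_on {1..n} F2" unfolding failure_pattern_on_def F2_def mono_def by auto
    show "\<forall>t p. sc2 t = Some p \<longrightarrow> p \<in> {1..n} \<and> p \<notin> F2 t" unfolding sc2_def F2_def using n2 by auto
    show "\<forall>p\<in>Correct {1..n} F2. \<forall>t. \<exists>t'\<ge>t. sc2 t' = Some p" unfolding C2
    proof (intro ballI allI)
      fix p t assume "p \<in> {2::nat}"
      then show "\<exists>t'\<ge>t. sc2 t' = Some p" by (intro exI[of _ "t + T1"]) (simp add: sc2_def)
    qed
    show "\<forall>p\<in>Correct {1..n} F2. \<forall>s j q. sc2 s = Some q \<and> 0 < j \<longrightarrow> (\<exists>t0. \<forall>t\<ge>t0. sc2 t = Some p \<longrightarrow> g2.allowed t (s,j))"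
      unfolding g2.allowed_def C2 by (auto simp: sc2_def split: if_splits)
    show "\<forall>k. n - f \<le> card (queriers A V2 sc2 g2.ev k) \<longrightarrow> (\<exists>t0. \<forall>t\<ge>t0. late2 t)"
    proof (intro allI impI)
      fix k assume "n - f \<le> card (queriers A V2 sc2 g2.ev k)"
      with q2[of k] fn show "\<exists>t0. \<forall>t\<ge>t0. late2 t" by simp
    qed
    show "\<forall>t p. late2 t \<and> sc2 t = Some p \<longrightarrow> p = 2" unfolding late2_def by simp
  qed
  have "card (Faulty F2) \<le> n - 1" unfolding Fa2 using n2 by simp
  note S2 = solvesD[OF sol run2 this]
  have one2: "(2::nat) \<in> {1..n}" using n2 by simp
  have s2: "\<exists>t. decision A (state A V2 sc2 g2.ev t 2) \<noteq> None" using S2 C2 by blast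
  have val2: "\<forall>t d. decision A (state A V2 sc2 g2.ev t 2) = Some d \<longrightarrow> d \<in> ConsP n F2 V2"
    using S2 one2 by blast
  obtain D2 d2 where D2: "decision A (state A V2 sc2 g2.ev D2 2) = Some d2" using s2 by blast
  have "d2 = True" using val2 D2 ConsP_all[OF n1] unfolding V2_def by auto
  with D2 have D2': "decision A (state A V2 sc2 g2.ev D2 2) = Some True" by simp
  define sc3 :: "nat \<Rightarrow> nat option" where "sc3 = (\<lambda>t. if t < T1 then Some 1 else Some 2)"
  define F3 :: failure_pattern where "F3 = (\<lambda>t. ({1..n} - {1,2}) \<union> (if T1 \<le> t then {1} else {}))"
  define V3 :: "nat \<Rightarrow> bool" where "V3 = (\<lambda>q. q \<noteq> 1)"
  define late3 :: "nat \<Rightarrow> bool" where "late3 = (\<lambda>t. T1 + D2 \<le> t)"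
  interpret g3: gen A V3 sc3 late3 .
  have Fa3: "Faulty F3 = {1..n} - {2}"
  proof
    show "Faulty F3 \<subseteq> {1..n} - {2}" unfolding Faulty_def F3_def using n1 by auto
    have "F3 T1 = {1..n} - {2}" unfolding F3_def using n1 by auto
    then show "{1..n} - {2} \<subseteq> Faulty F3" unfolding Faulty_def by blast
  qed
  have C3: "Correct {1..n} F3 = {2}" unfolding Correct_def Fa3 using n2 by auto
  have run3: "is_run n (ConsP n) f A F3 V3 sc3 g3.ev g3.src (g3.oraP 2)"
  proof (rule g3.run)
    show "failure_pattern_on {1..n} F3" unfolding failure_pattern_on_def F3_def mono_def using n1 by auto
    show "\<forall>t p. sc3 t = Some p \<longrightarrow> p \<in> {1..n} \<and> p \<notin> F3 t" unfolding sc3_def F3_def using n2 by auto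
    show "\<forall>p\<in>Correct {1..n} F3. \<forall>t. \<exists>t'\<ge>t. sc3 t' = Some p" unfolding C3
    proof (intro ballI allI)
      fix p t assume "p \<in> {2::nat}"
      then show "\<exists>t'\<ge>t. sc3 t' = Some p" by (intro exI[of _ "t + T1"]) (simp add: sc3_def)
    qed
    show "\<forall>p\<in>Correct {1..n} F3. \<forall>s j q. sc3 s = Some q \<and> 0 < j \<longrightarrow> (\<exists>t0. \<forall>t\<ge>t0. sc3 t = Some p \<longrightarrow> g3.allowed t (s,j))"
      unfolding g3.allowed_def by (auto simp: late3_def)
    show "\<forall>k. n - f \<le> card (queriers A V3 sc3 g3.ev k) \<longrightarrow> (\<exists>t0. \<forall>t\<ge>t0. late3 t)"
      unfolding late3_def by auto
    show "\<forall>t p. late3 t \<and> sc3 t = Some p \<longrightarrow> p = 2" unfolding late3_def sc3_def by auto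
  qed
  have "card (Faulty F3) \<le> n - 1" unfolding Fa3 using n2 by simp
  from solvesD[OF sol run3 this] have agr: "\<forall>p\<in>{1..n}. \<forall>q\<in>{1..n}. \<forall>t t' d d'.
            decision A (state A V3 sc3 g3.ev t p) = Some d
            \<and> decision A (state A V3 sc3 g3.ev t' q) = Some d' \<longrightarrow> d = d'" by blast
  have e1: "state A V1 sc1 g1.ev T1 1 = state A V3 sc3 g3.ev T1 1"
  proof -
    have h1: "V1 1 = V3 1" by (simp add: V1_def V3_def)
    have h2: "\<forall>t<T1. (sc1 t = Some 1) = (sc3 t = Some 1)" by (simp add: sc1_def sc3_def)
    have h3: "\<forall>t<T1. sc1 t = Some 1 \<longrightarrow> \<not> late1 t \<and> \<not> late3 t" by (simp add: late1_def late3_def)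
    show ?thesis using sim[where V=V1 and V'=V3 and p=1 and T=T1 and sc=sc1 and sc'=sc3 and late=late1 and late'=late3 and A=A, OF h1 h2 h3] .
  qed
  have e2: "state A V2 sc2 g2.ev D2 2 = state A V3 sc3 g3.ev D2 2"
  proof -
    have h1: "V2 2 = V3 2" by (simp add: V2_def V3_def)
    have h2: "\<forall>t<D2. (sc2 t = Some 2) = (sc3 t = Some 2)" by (simp add: sc2_def sc3_def)
    have h3: "\<forall>t<D2. sc2 t = Some 2 \<longrightarrow> \<not> late2 t \<and> \<not> late3 t" by (simp add: late2_def late3_def)
    show ?thesis using sim[where V=V2 and V'=V3 and p=2 and T=D2 and sc=sc2 and sc'=sc3 and late=late2 and late'=late3 and A=A, OF h1 h2 h3] .
  qed
  have "decision A (state A V3 sc3 g3.ev T1 1) = Some False" using T1' e1 by simp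
  moreover have "decision A (state A V3 sc3 g3.ev D2 2) = Some True" using D2' e2 by simp
  ultimately show False using agr one1 one2 by blast
qed



definition A0 :: "(nat, nat) alg" where
  "A0 = \<lparr>init = (\<lambda>p v. if v then 1 else 0),
     trans = (\<lambda>p s e. if s \<le> 1 then (2, [], Some (s = 1))
        else if s = 2 then (case e of Response k d \<Rightarrow> if k = 0 then (if d then 4 else 3, [], None) else (2, [], None)
                            | _ \<Rightarrow> (2, [], None))
        else (s, [], None)),
     decision = (\<lambda>s. if s = 3 then Some False else if s = 4 then Some True else None)\<rparr>"

lemma A0_init[simp]: "init A0 p v = (if v then 1 else 0)" by (simp add: A0_def)
lemma A0_dec: "decision A0 s = Some d \<longleftrightarrow> (s = 3 \<and> d = False) \<or> (s = 4 \<and> d = True)"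
  by (auto simp: A0_def)
lemma A0_tr_ge2: "2 \<le> fst (trans A0 p s e)" by (auto simp: A0_def split: event.splits)
lemma A0_tr_ge3: "3 \<le> s \<Longrightarrow> fst (trans A0 p s e) = s" by (auto simp: A0_def)
lemma A0_tr_le1: "s \<le> 1 \<Longrightarrow> trans A0 p s e = (2, [], Some (s = 1))" by (auto simp: A0_def)
lemma A0_tr_2: "trans A0 p 2 e = (case e of Response k d \<Rightarrow> if k = 0 then (if d then 4 else 3, [], None) else (2, [], None)
                            | _ \<Rightarrow> (2, [], None))" by (simp add: A0_def)
lemma A0_tr_mono: "2 \<le> s \<Longrightarrow> 2 \<le> fst (trans A0 p s e)" using A0_tr_ge2 by simp
lemma A0_tr_le4: "s \<le> 4 \<Longrightarrow> fst (trans A0 p s e) \<le> 4" by (auto simp: A0_def split: event.splits)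

lemma st_le4: "state A0 V sc ev t p \<le> 4"
  by (induction t) (auto intro: A0_tr_le4)

lemma st_low: "state A0 V sc ev t p \<le> 1 \<Longrightarrow> state A0 V sc ev t p = (if V p then 1 else 0)"
proof (induction t)
  case 0 then show ?case by simp
next
  case (Suc t)
  show ?case
  proof (cases "sc t = Some p")
    case True
    then have "2 \<le> state A0 V sc ev (Suc t) p" using A0_tr_ge2 by simp
    then show ?thesis using Suc.prems by simp
  next
    case False
    then show ?thesis using Suc by simp
  qed
qed

lemma st_init: "(\<forall>s<t. sc s \<noteq> Some p) \<Longrightarrow> state A0 V sc ev t p = (if V p then 1 else 0)"
  by (induction t) auto

lemma st_ge2: assumes "2 \<le> state A0 V sc ev t p" "t \<le> t'" shows "2 \<le> state A0 V sc ev t' p"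
  using assms(2)
proof (induction t' rule: dec_induct)
  case base then show ?case using assms(1) by simp
next
  case (step m) then show ?case using A0_tr_mono by simp
qed

lemma st_ge3: assumes "3 \<le> state A0 V sc ev t p" "t \<le> t'" shows "state A0 V sc ev t' p = state A0 V sc ev t p"
  using assms(2)
proof (induction t' rule: dec_induct)
  case base then show ?case by simp
next
  case (step m) then show ?case using A0_tr_ge3 assms(1) by simp
qed

lemma query_A0: "sc s = Some p \<Longrightarrow> query A0 V sc ev s =
   (if state A0 V sc ev s p \<le> 1 then Some (state A0 V sc ev s p = 1) else None)"
  unfolding query_def step_output_def
  by (auto simp: A0_def split: event.splits)

lemma query_val: "sc s = Some p \<Longrightarrow> query A0 V sc ev s = Some v \<Longrightarrow> v = V p \<and> state A0 V sc ev s p \<le> 1"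
  using query_A0[of sc s p V ev] st_low[of V sc ev s p] by (auto split: if_splits)

lemma dec_resp: "decision A0 (state A0 V sc ev t p) = Some d \<Longrightarrow> \<exists>t'<t. sc t' = Some p \<and> ev t' = Response 0 d"
proof (induction t)
  case 0 then show ?case by (auto simp: A0_dec split: if_splits)
next
  case (Suc t)
  show ?case
  proof (cases "sc t = Some p")
    case False
    then show ?thesis using Suc by (auto intro: less_SucI)
  next
    case True
    let ?s = "state A0 V sc ev t p"
    have st: "state A0 V sc ev (Suc t) p = fst (trans A0 p ?s (ev t))" using True by simp
    consider "?s \<le> 1" | "?s = 2" | "3 \<le> ?s" by linarith
    then show ?thesis
    proof cases
      case 1
      then show ?thesis using Suc.prems st A0_tr_le1[OF 1] by (simp add: A0_dec)
    next
      case 2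
      have "ev t = Response 0 d"
        using Suc.prems st unfolding 2 A0_tr_2
        by (auto simp: A0_dec split: event.splits if_splits)
      then show ?thesis using True by blast
    next
      case 3
      then show ?thesis using Suc st A0_tr_ge3[OF 3] by (auto intro: less_SucI)
    qed
  qed
qed

lemma A0_props:
  assumes run: "is_run n (ConsP n) (n - 1) A0 F V sc ev src ora" and n1: "1 \<le> n"
  shows "(\<forall>p\<in>Correct {1..n} F. \<exists>t. decision A0 (state A0 V sc ev t p) \<noteq> None)
      \<and> (\<forall>p\<in>{1..n}. \<forall>t t' d. decision A0 (state A0 V sc ev t p) = Some d \<and> t \<le> t'
            \<longrightarrow> decision A0 (state A0 V sc ev t' p) = Some d)
      \<and> (\<forall>p\<in>{1..n}. \<forall>q\<in>{1..n}. \<forall>t t' d d'.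
            decision A0 (state A0 V sc ev t p) = Some d
            \<and> decision A0 (state A0 V sc ev t' q) = Some d' \<longrightarrow> d = d')
      \<and> (\<forall>p\<in>{1..n}. \<forall>t d. decision A0 (state A0 V sc ev t p) = Some d
            \<longrightarrow> d \<in> ConsP n F V)"
proof -
  have steps: "\<forall>t p. sc t = Some p \<longrightarrow> p \<in> {1..n} \<and> p \<notin> F t"
   and inf: "\<forall>p\<in>Correct {1..n} F. \<forall>t. \<exists>t'\<ge>t. sc t' = Some p"
   and resp: "\<forall>t p k d. sc t = Some p \<and> ev t = Response k d \<longrightarrow>
        d = ora k \<and> (\<exists>v. queried_before A0 V sc ev k p v t)
        \<and> (\<forall>V'. (\<forall>q v. queried_before A0 V sc ev k q v t \<longrightarrow> V' q = v) \<longrightarrow> d \<in> ConsP n F V')"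
   and live: "\<forall>k. card (queriers A0 V sc ev k) \<ge> n - (n - 1) \<longrightarrow>
        (\<forall>p \<in> queriers A0 V sc ev k \<inter> Correct {1..n} F.
            \<exists>t. sc t = Some p \<and> ev t = Response k (ora k))"
    using run by (unfold is_run_def) (elim conjE, assumption)+
  have decora: "d = ora 0 \<and> d \<in> ConsP n F V" if dd: "decision A0 (state A0 V sc ev t p) = Some d" for t p d
  proof -
    obtain t' where t': "t' < t" "sc t' = Some p" "ev t' = Response 0 d" using dec_resp[of V sc ev t p d] dd by blast
    have r: "d = ora 0" "\<forall>V'. (\<forall>q v. queried_before A0 V sc ev 0 q v t' \<longrightarrow> V' q = v) \<longrightarrow> d \<in> ConsP n F V'"
      using resp[rule_format, OF conjI[OF t'(2) t'(3)]] by blast+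
    have "\<forall>q v. queried_before A0 V sc ev 0 q v t' \<longrightarrow> V q = v"
    proof (intro allI impI)
      fix q v assume "queried_before A0 V sc ev 0 q v t'"
      then obtain s where s: "sc s = Some q" "query A0 V sc ev s = Some v" unfolding queried_before_def by blast
      show "V q = v" using query_val[OF s] by simp
    qed
    then show ?thesis using r by blast
  qed
  have termi: "\<exists>t. decision A0 (state A0 V sc ev t p) \<noteq> None" if pc: "p \<in> Correct {1..n} F" for p
  proof -
    obtain t1 where "t1 \<ge> 0 \<and> sc t1 = Some p" using inf[rule_format, OF pc, of 0] by (elim exE)
    then have ex: "\<exists>s. sc s = Some p" by (intro exI[of _ t1]) simp
    define s0 where "s0 = (LEAST s. sc s = Some p)"
    have s0: "sc s0 = Some p" unfolding s0_def by (rule LeastI_ex[OF ex])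
    have bef: "\<forall>s<s0. sc s \<noteq> Some p" unfolding s0_def using not_less_Least by blast
    have st0: "state A0 V sc ev s0 p = (if V p then 1 else 0)" using st_init[OF bef] .
    have q0: "query A0 V sc ev s0 = Some (V p)" using query_A0[of sc s0 p V ev, OF s0] st0 by simp
    have "{s. s < s0 \<and> sc s = Some p \<and> query A0 V sc ev s \<noteq> None} = {}" using bef by auto
    then have qi: "qindex A0 V sc ev p s0 = 0" unfolding qindex_def by simp
    have pq: "p \<in> queriers A0 V sc ev 0" unfolding queriers_def using s0 q0 qi by blast
    have "queriers A0 V sc ev 0 \<subseteq> {1..n}" unfolding queriers_def using steps by blast
    then have "finite (queriers A0 V sc ev 0)" using finite_subset by blast
    then have "card (queriers A0 V sc ev 0) \<ge> 1" using pq card_0_eq by fastforce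
    then have "card (queriers A0 V sc ev 0) \<ge> n - (n - 1)" using n1 by simp
    then have "\<exists>t. sc t = Some p \<and> ev t = Response 0 (ora 0)" using live[rule_format] pc pq by blast
    then obtain t where t: "sc t = Some p" "ev t = Response 0 (ora 0)" by blast
    then have "\<exists>v. queried_before A0 V sc ev 0 p v t" using resp[rule_format, OF conjI[OF t(1) t(2)]] by blast
    then obtain v where "queried_before A0 V sc ev 0 p v t" by blast
    then obtain s where s: "s < t" "sc s = Some p" "query A0 V sc ev s = Some v"
      unfolding queried_before_def by blast
    have "state A0 V sc ev s p \<le> 1" using query_val[OF s(2,3)] by simp
    then have "state A0 V sc ev (Suc s) p = 2" using s(2) A0_tr_le1 by simp
    then have ge2: "2 \<le> state A0 V sc ev t p" using st_ge2[of V sc ev "Suc s" p t] s(1) by simp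
    consider "state A0 V sc ev t p = 2" | "state A0 V sc ev t p = 3" | "state A0 V sc ev t p = 4"
      using ge2 st_le4[of V sc ev t p] by linarith
    then show ?thesis
    proof cases
      case 1
      have "state A0 V sc ev (Suc t) p = (if ora 0 then 4 else 3)" using t 1 A0_tr_2 by simp
      then show ?thesis by (intro exI[of _ "Suc t"]) (auto simp: A0_def)
    next
      case 2 then show ?thesis by (intro exI[of _ t]) (auto simp: A0_def)
    next
      case 3 then show ?thesis by (intro exI[of _ t]) (auto simp: A0_def)
    qed
  qed
  have irr: "decision A0 (state A0 V sc ev t' p) = Some d"
    if "decision A0 (state A0 V sc ev t p) = Some d" "t \<le> t'" for p t t' d
  proof -
    have "3 \<le> state A0 V sc ev t p" using that(1) by (auto simp: A0_dec)
    then show ?thesis using st_ge3[OF _ that(2)] that(1) by simp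
  qed
  show ?thesis
  proof (intro conjI ballI allI impI)
    fix p assume "p \<in> Correct {1..n} F" then show "\<exists>t. decision A0 (state A0 V sc ev t p) \<noteq> None" by (rule termi)
  next
    fix p t t' d assume "decision A0 (state A0 V sc ev t p) = Some d \<and> t \<le> t'"
    then show "decision A0 (state A0 V sc ev t' p) = Some d" using irr by blast
  next
    fix p q t t' d d' assume "decision A0 (state A0 V sc ev t p) = Some d \<and> decision A0 (state A0 V sc ev t' q) = Some d'"
    then show "d = d'" using decora by metis
  next
    fix p t d assume "decision A0 (state A0 V sc ev t p) = Some d"
    then show "d \<in> ConsP n F V" using decora by blast
  qed
qed

lemma part1:
  assumes "1 \<le> n"
  shows "C_reducible TYPE(nat) TYPE(nat) (ConsTask n f) (ConsTask n (n - 1))"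
  unfolding C_reducible_def
proof
  show "tprocs (ConsTask n f) = tprocs (ConsTask n (n - 1))" by (simp add: ConsTask_def)
  show "\<exists>A :: (nat,nat) alg. solves_with A (ConsTask n f) (ConsTask n (n - 1))"
  proof (intro exI)
    show "solves_with A0 (ConsTask n f) (ConsTask n (n - 1))"
      unfolding solves_with_def ConsTask_def Let_def task.simps
      apply (intro allI impI)
      apply (rule A0_props)
       apply (erule conjunct1)
      apply (rule assms)
      done
  qed
qed


theorem mainTheorem15:
  fixes n f :: nat
  assumes "1 \<le> f" and "f + 2 \<le> n"
  shows "C_reducible TYPE(nat) TYPE(nat) (ConsTask n f) (ConsTask n (n - 1))
         \<and> \<not> C_reducible TYPE('s) TYPE('m) (ConsTask n (n - 1)) (ConsTask n f)"
proof
  have "1 \<le> n" using assms by simp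
  then show "C_reducible TYPE(nat) TYPE(nat) (ConsTask n f) (ConsTask n (n - 1))" by (rule part1)
  have "\<forall>A :: ('s,'m) alg. \<not> solves_with A (ConsTask n (n - 1)) (ConsTask n f)"
    using impossible[OF assms] by blast
  then show "\<not> C_reducible TYPE('s) TYPE('m) (ConsTask n (n - 1)) (ConsTask n f)"
    unfolding C_reducible_def by blast
qed

end
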